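(* Let $\Gamma$ be a distance-regular graph with diameter $D\ge3$ and intersection number $a_1\ne0$. Let $\sigma_0,\dots,\sigma_D$ and $\rho_0,\dots,\rho_D$ be nontrivial pseudo cosine sequences forming a tight pair, and let $\varepsilon$ be the corresponding auxiliary parameter. Then $\varepsilon\notin\{1,-1\}$, and $\sigma_{i-1}\ne\sigma_i$ and $\rho_{i-1}\ne\rho_i$ for $1\le i\le D$.
   Context: $\Gamma$ is a finite connected undirected graph without loops or multiple edges, distance-regular with diameter $D$, intersection numbers $a_i,b_i,c_i$ ($c_0=0$, $b_D=0$), valency $k$, $c_i+a_i+b_i=k$. For $\theta\in\mathbb{R}$ the pseudo cosine sequence for $\theta$ is the sequence of reals $\sigma_0,\dots,\sigma_D$ with $\sigma_0=1$ and $c_i\sigma_{i-1}+a_i\sigma_i+b_i\sigma_{i+1}=\theta\sigma_i$ for $0\le i\le D-1$; nontrivial means $\sigma_1\ne1$. Pseudo cosine sequences $\sigma_i$, $\rho_i$ form a tight pair if $(\sigma_i\rho_i)_{i=0}^D$ is a pseudo cosine sequence. For a tight pair of nontrivial pseudo cosine sequences, an auxiliary parameter is a real $\varepsilon$ with $\sigma_i\rho_i-\sigma_{i-1}\rho_{i-1}=\varepsilon(\sigma_{i-1}\rho_i-\sigma_i\rho_{i-1})$ for $1\le i\le D$ (if $\sigma_1\ne\rho_1$ it is unique, equal to $(\sigma_1\rho_1-1)/(\rho_1-\sigma_1)$). *)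

theory Defs
  imports Main "HOL-Library.Library"
begin

definition gdist :: "('a \<Rightarrow> 'a \<Rightarrow> bool) \<Rightarrow> 'a \<Rightarrow> 'a \<Rightarrow> nat" where
  "gdist E x y = (LEAST n. (E ^^ n) x y)"

definition simple_graph :: "'a set \<Rightarrow> ('a \<Rightarrow> 'a \<Rightarrow> bool) \<Rightarrow> bool" where
  "simple_graph V E \<longleftrightarrow> finite V \<and> V \<noteq> {} \<and>
     (\<forall>x y. E x y \<longrightarrow> x \<in> V \<and> y \<in> V) \<and>
     (\<forall>x y. E x y \<longrightarrow> E y x) \<and> (\<forall>x. \<not> E x x)"

definition connected_graph :: "'a set \<Rightarrow> ('a \<Rightarrow> 'a \<Rightarrow> bool) \<Rightarrow> bool" where
  "connected_graph V E \<longleftrightarrow> (\<forall>x\<in>V. \<forall>y\<in>V. \<exists>n. (E ^^ n) x y)"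

definition distance_regular ::
  "'a set \<Rightarrow> ('a \<Rightarrow> 'a \<Rightarrow> bool) \<Rightarrow> nat \<Rightarrow> (nat \<Rightarrow> nat) \<Rightarrow> (nat \<Rightarrow> nat) \<Rightarrow> (nat \<Rightarrow> nat) \<Rightarrow> bool" where
  "distance_regular V E D a b c \<longleftrightarrow>
     simple_graph V E \<and> connected_graph V E \<and>
     D = Max {gdist E x y | x y. x \<in> V \<and> y \<in> V} \<and>
     c 0 = 0 \<and> b D = 0 \<and>
     (\<forall>x\<in>V. \<forall>y\<in>V.
        (0 < gdist E x y \<longrightarrow>
           c (gdist E x y) = card {z \<in> V. E y z \<and> gdist E x z + 1 = gdist E x y}) \<and>
        a (gdist E x y) = card {z \<in> V. E y z \<and> gdist E x z = gdist E x y} \<and>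
        b (gdist E x y) = card {z \<in> V. E y z \<and> gdist E x z = gdist E x y + 1})"

definition pseudo_cosine_seq_for ::
  "nat \<Rightarrow> (nat \<Rightarrow> nat) \<Rightarrow> (nat \<Rightarrow> nat) \<Rightarrow> (nat \<Rightarrow> nat) \<Rightarrow> real \<Rightarrow> (nat \<Rightarrow> real) \<Rightarrow> bool" where
  "pseudo_cosine_seq_for D a b c \<theta> \<sigma> \<longleftrightarrow> \<sigma> 0 = 1 \<and>
     (\<forall>i<D. real (c i) * \<sigma> (i - 1) + real (a i) * \<sigma> i + real (b i) * \<sigma> (i + 1) = \<theta> * \<sigma> i)"

definition pseudo_cosine_seq ::
  "nat \<Rightarrow> (nat \<Rightarrow> nat) \<Rightarrow> (nat \<Rightarrow> nat) \<Rightarrow> (nat \<Rightarrow> nat) \<Rightarrow> (nat \<Rightarrow> real) \<Rightarrow> bool" where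
  "pseudo_cosine_seq D a b c \<sigma> \<longleftrightarrow> (\<exists>\<theta>. pseudo_cosine_seq_for D a b c \<theta> \<sigma>)"

definition tight_pair ::
  "nat \<Rightarrow> (nat \<Rightarrow> nat) \<Rightarrow> (nat \<Rightarrow> nat) \<Rightarrow> (nat \<Rightarrow> nat) \<Rightarrow> (nat \<Rightarrow> real) \<Rightarrow> (nat \<Rightarrow> real) \<Rightarrow> bool" where
  "tight_pair D a b c \<sigma> \<rho> \<longleftrightarrow> pseudo_cosine_seq D a b c \<sigma> \<and> pseudo_cosine_seq D a b c \<rho> \<and>
     pseudo_cosine_seq D a b c (\<lambda>i. \<sigma> i * \<rho> i)"

definition auxiliary_parameter ::
  "nat \<Rightarrow> (nat \<Rightarrow> real) \<Rightarrow> (nat \<Rightarrow> real) \<Rightarrow> real \<Rightarrow> bool" where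
  "auxiliary_parameter D \<sigma> \<rho> \<epsilon> \<longleftrightarrow>
     (\<forall>i\<in>{1..D}. \<sigma> i * \<rho> i - \<sigma> (i - 1) * \<rho> (i - 1) =
                   \<epsilon> * (\<sigma> (i - 1) * \<rho> i - \<sigma> i * \<rho> (i - 1)))"

end

theory Submission
  imports Defs
begin


lemma gd_ex: "connected_graph V E \<Longrightarrow> x\<in>V \<Longrightarrow> y\<in>V \<Longrightarrow> (E ^^ gdist E x y) x y"
  unfolding gdist_def connected_graph_def by (meson LeastI_ex)

lemma gd_le: "(E ^^ n) x y \<Longrightarrow> gdist E x y \<le> n"
  unfolding gdist_def by (rule Least_le)

lemma gd0: "connected_graph V E \<Longrightarrow> x\<in>V \<Longrightarrow> y\<in>V \<Longrightarrow> gdist E x y = 0 \<longleftrightarrow> x = y"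
proof
  assume "connected_graph V E" "x\<in>V" "y\<in>V" "gdist E x y = 0"
  then show "x = y" using gd_ex[of V E x y] by simp
next
  assume "x = y" then show "gdist E x y = 0" using gd_le[where n=0 and E=E and x=x and y=y] by simp
qed

lemma gd_tri: "connected_graph V E \<Longrightarrow> x\<in>V \<Longrightarrow> y\<in>V \<Longrightarrow> E y z \<Longrightarrow> gdist E x z \<le> gdist E x y + 1"
  using gd_ex[of V E x y] gd_le relpowp_Suc_I by fastforce

lemma gd_step:
  assumes SG: "simple_graph V E" and CG: "connected_graph V E" and "x\<in>V" "y\<in>V"
    and "gdist E x y = Suc n"
  shows "\<exists>w\<in>V. E w y \<and> gdist E x w = n"
proof -
  have "(E ^^ Suc n) x y" using gd_ex[OF CG assms(3,4)] assms(5) by simp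
  then obtain w where w: "(E ^^ n) x w" "E w y" by (rule relpowp_Suc_E)
  have wV: "w \<in> V" using SG w(2) unfolding simple_graph_def by blast
  have "gdist E x w \<le> n" using gd_le[OF w(1)] .
  moreover have "gdist E x y \<le> gdist E x w + 1" using SG w(2) gd_tri[OF CG assms(3) wV, of y]
    unfolding simple_graph_def by blast
  ultimately show ?thesis using wV w(2) assms(5) by auto
qed

lemma gd_chain:
  assumes SG: "simple_graph V E" and CG: "connected_graph V E" and xV: "x\<in>V"
  shows "y\<in>V \<Longrightarrow> gdist E x y = m \<Longrightarrow> j < m \<Longrightarrow> \<exists>u\<in>V. \<exists>v\<in>V. gdist E x u = j \<and> gdist E x v = Suc j \<and> E u v"
proof (induction m arbitrary: y)
  case 0 then show ?case by simp
next
  case (Suc n)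
  obtain w where w: "w\<in>V" "E w y" "gdist E x w = n" using gd_step[OF SG CG xV Suc.prems(1,2)] by blast
  show ?case
  proof (cases "j = n")
    case True then show ?thesis using w Suc.prems by blast
  next
    case False then show ?thesis using Suc.IH[OF w(1) w(3)] Suc.prems(3) by simp
  qed
qed

lemma graph_facts:
  assumes DR: "distance_regular V E D a b c" and D1: "D \<ge> 1"
  shows "a 0 = 0" "c 1 = 1" "\<And>i. 1\<le>i \<Longrightarrow> i\<le>D \<Longrightarrow> c i + a i + b i = b 0"
    "\<And>i. 1\<le>i \<Longrightarrow> i\<le>D \<Longrightarrow> c i \<ge> 1" "\<And>i. i<D \<Longrightarrow> b i \<ge> 1"
proof -
  have SG: "simple_graph V E" and CG: "connected_graph V E"
    and DM: "D = Max {gdist E x y | x y. x \<in> V \<and> y \<in> V}"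
    and cc: "\<And>x y. x\<in>V \<Longrightarrow> y\<in>V \<Longrightarrow> 0 < gdist E x y \<Longrightarrow>
           c (gdist E x y) = card {z \<in> V. E y z \<and> gdist E x z + 1 = gdist E x y}"
    and aa: "\<And>x y. x\<in>V \<Longrightarrow> y\<in>V \<Longrightarrow> a (gdist E x y) = card {z \<in> V. E y z \<and> gdist E x z = gdist E x y}"
    and bb: "\<And>x y. x\<in>V \<Longrightarrow> y\<in>V \<Longrightarrow> b (gdist E x y) = card {z \<in> V. E y z \<and> gdist E x z = gdist E x y + 1}"
    using DR unfolding distance_regular_def by auto
  have finV: "finite V" and Vne: "V \<noteq> {}" and EV: "\<And>x y. E x y \<Longrightarrow> x \<in> V \<and> y \<in> V"
    and Esym: "\<And>x y. E x y \<Longrightarrow> E y x" and Eirr: "\<And>x. \<not> E x x"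
    using SG unfolding simple_graph_def by auto
  have fin: "finite {gdist E x y | x y. x \<in> V \<and> y \<in> V}"
    using finite_image_set2[of "\<lambda>x. x\<in>V" "\<lambda>y. y\<in>V" "gdist E"] finV by simp
  have "D \<in> {gdist E x y | x y. x \<in> V \<and> y \<in> V}" unfolding DM
    by (rule Max_in[OF fin]) (use Vne in auto)
  then obtain x0 y0 where x0: "x0\<in>V" "y0\<in>V" "gdist E x0 y0 = D" by blast
  have deg: "\<And>y. y\<in>V \<Longrightarrow> b 0 = card {z\<in>V. E y z}"
  proof -
    fix y assume yV: "y\<in>V"
    have "b 0 = card {z \<in> V. E y z \<and> gdist E y z = 0 + 1}" using bb[OF yV yV] gd0[OF CG yV yV] by simp
    also have "{z \<in> V. E y z \<and> gdist E y z = 0 + 1} = {z\<in>V. E y z}"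
    proof safe
      fix z assume z: "z\<in>V" "E y z"
      have "gdist E y z \<le> gdist E y y + 1" using gd_tri[OF CG yV yV z(2)] .
      moreover have "gdist E y z \<noteq> 0" using gd0[OF CG yV z(1)] z(2) Eirr by auto
      ultimately show "gdist E y z = 0 + 1" using gd0[OF CG yV yV] by simp
    qed
    finally show "b 0 = card {z\<in>V. E y z}" .
  qed
  have dist_ex: "\<And>j. j < D \<Longrightarrow> \<exists>u\<in>V. \<exists>v\<in>V. gdist E x0 u = j \<and> gdist E x0 v = Suc j \<and> E u v"
    using gd_chain[OF SG CG x0(1) x0(2) x0(3)] by blast
  show "a 0 = 0"
  proof -
    have "a 0 = card {z \<in> V. E x0 z \<and> gdist E x0 z = gdist E x0 x0}" using aa[OF x0(1) x0(1)] gd0[OF CG x0(1) x0(1)] by simp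
    also have "{z \<in> V. E x0 z \<and> gdist E x0 z = gdist E x0 x0} = {}"
      using gd0[OF CG x0(1)] gd0[OF CG x0(1) x0(1)] Eirr by auto
    finally show ?thesis by simp
  qed
  show "\<And>i. i<D \<Longrightarrow> b i \<ge> 1"
  proof -
    fix i assume "i < D"
    then obtain u v where uv: "u\<in>V" "v\<in>V" "gdist E x0 u = i" "gdist E x0 v = Suc i" "E u v" using dist_ex by blast
    have "b i = card {z \<in> V. E u z \<and> gdist E x0 z = gdist E x0 u + 1}" using bb[OF x0(1) uv(1)] uv(3) by simp
    moreover have "v \<in> {z \<in> V. E u z \<and> gdist E x0 z = gdist E x0 u + 1}" using uv by simp
    moreover have "finite {z \<in> V. E u z \<and> gdist E x0 z = gdist E x0 u + 1}" using finV by simp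
    ultimately show "b i \<ge> 1"
      by (metis One_nat_def Suc_leI card_gt_0_iff empty_iff)
  qed
  have cpos: "\<And>i. 1\<le>i \<Longrightarrow> i\<le>D \<Longrightarrow> \<exists>x\<in>V. \<exists>y\<in>V. gdist E x y = i \<and> c i \<ge> 1"
  proof -
    fix i assume i: "1\<le>i" "i\<le>D"
    then obtain j where j: "i = Suc j" "j < D" by (cases i) auto
    then obtain u v where uv: "u\<in>V" "v\<in>V" "gdist E x0 u = j" "gdist E x0 v = Suc j" "E u v" using dist_ex by blast
    have "c i = card {z \<in> V. E v z \<and> gdist E x0 z + 1 = gdist E x0 v}" using cc[OF x0(1) uv(2)] uv(4) j by simp
    moreover have "u \<in> {z \<in> V. E v z \<and> gdist E x0 z + 1 = gdist E x0 v}" using uv Esym by simp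
    moreover have "finite {z \<in> V. E v z \<and> gdist E x0 z + 1 = gdist E x0 v}" using finV by simp
    ultimately have "c i \<ge> 1"
      by (metis One_nat_def Suc_leI card_gt_0_iff empty_iff)
    then show "\<exists>x\<in>V. \<exists>y\<in>V. gdist E x y = i \<and> c i \<ge> 1" using x0(1) uv(2) uv(4) j by blast
  qed
  show "\<And>i. 1\<le>i \<Longrightarrow> i\<le>D \<Longrightarrow> c i \<ge> 1" using cpos by blast
  show "\<And>i. 1\<le>i \<Longrightarrow> i\<le>D \<Longrightarrow> c i + a i + b i = b 0"
  proof -
    fix i assume i: "1\<le>i" "i\<le>D"
    then obtain x y where xy: "x\<in>V" "y\<in>V" "gdist E x y = i" using cpos by blast
    let ?C = "{z \<in> V. E y z \<and> gdist E x z + 1 = gdist E x y}"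
    let ?A = "{z \<in> V. E y z \<and> gdist E x z = gdist E x y}"
    let ?B = "{z \<in> V. E y z \<and> gdist E x z = gdist E x y + 1}"
    have un: "{z\<in>V. E y z} = ?C \<union> ?A \<union> ?B"
    proof safe
      fix z assume z: "z\<in>V" "E y z" "gdist E x z \<noteq> gdist E x y" "gdist E x z \<noteq> gdist E x y + 1"
      have "gdist E x z \<le> gdist E x y + 1" using gd_tri[OF CG xy(1,2) z(2)] .
      moreover have "gdist E x y \<le> gdist E x z + 1" using gd_tri[OF CG xy(1) z(1) Esym[OF z(2)]] .
      ultimately show "gdist E x z + 1 = gdist E x y" using z(3,4) by linarith
    qed
    have "card {z\<in>V. E y z} = card ?C + card ?A + card ?B"
      unfolding un using finV
      by (subst card_Un_disjoint, auto, subst card_Un_disjoint, auto)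
    then show "c i + a i + b i = b 0"
      using deg[OF xy(2)] cc[OF xy(1,2)] aa[OF xy(1,2)] bb[OF xy(1,2)] xy(3) i by simp
  qed
  show "c 1 = 1"
  proof -
    obtain x y where xy: "x\<in>V" "y\<in>V" "gdist E x y = 1" using cpos[of 1] D1 by blast
    have "c 1 = card {z \<in> V. E y z \<and> gdist E x z + 1 = gdist E x y}" using cc[OF xy(1,2)] xy(3) by simp
    also have "{z \<in> V. E y z \<and> gdist E x z + 1 = gdist E x y} = {x}"
    proof -
      have "E x y" using gd_ex[OF CG xy(1,2)] xy(3) by auto
      then show ?thesis using xy gd0[OF CG xy(1)] Esym by auto
    qed
    finally show ?thesis by simp
  qed
qed



lemma rec_at:
  assumes "pseudo_cosine_seq_for D a b c \<theta> \<sigma>" "i < D"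
  shows "real (c i) * \<sigma> (i - 1) + real (a i) * \<sigma> i + real (b i) * \<sigma> (i + 1) = \<theta> * \<sigma> i"
  using assms unfolding pseudo_cosine_seq_for_def by blast

lemma theta0:
  assumes "pseudo_cosine_seq_for D a b c \<theta> \<sigma>" "D \<ge> 1" "a 0 = 0" "c 0 = 0"
  shows "\<theta> = real (b 0) * \<sigma> 1"
proof -
  have "real (c 0) * \<sigma> (0 - 1) + real (a 0) * \<sigma> 0 + real (b 0) * \<sigma> (0 + 1) = \<theta> * \<sigma> 0"
    using rec_at[OF assms(1), of 0] assms(2) by simp
  then show ?thesis using assms(1,3,4) unfolding pseudo_cosine_seq_for_def by simp
qed

lemma key_x:
  fixes K x s r :: real
  assumes "(K*s - K + x)*(K*r - K + x) = x*(K*s*r - K + x)" "s \<noteq> 1" "r \<noteq> 1" "K \<noteq> 0"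
  shows "x = K"
proof -
  have "K*(s-1)*(r-1)*(K - x) = 0" using assms(1) by (simp add: algebra_simps)
  then show ?thesis using assms(2-4) by simp
qed



lemma tight1:
  fixes K a1 b1 s r t t' t'' s2 r2 :: real
  assumes "K = 1 + a1 + b1" "t = K*s" "t' = K*r" "t'' = K*s*r"
    and "b1*s2 = t*s - 1 - a1*s" "b1*r2 = t'*r - 1 - a1*r"
    and "b1*(s2*r2) = t''*(s*r) - 1 - a1*(s*r)" "s \<noteq> 1" "r \<noteq> 1"
  shows "(a1+1)*K*s*r + K*(s+r) + b1 + 1 = 0"
proof -
  have "b1*(t''*(s*r) - 1 - a1*(s*r)) = (t*s - 1 - a1*s)*(t'*r - 1 - a1*r)"
    using assms(5-7) by (metis mult.assoc mult.left_commute)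
  then have "(s-1)*(r-1)*((a1+1)*K*s*r + K*(s+r) + b1 + 1) = 0"
    using assms(1-4) by (simp add: algebra_simps)
  then show ?thesis using assms(8,9) by simp
qed

lemma no_m1:
  assumes a0: "a 0 = 0" and c0: "c 0 = 0" and c1: "c 1 = 1"
    and k1: "c 1 + a 1 + b 1 = b 0" and k2: "c 2 + a 2 + b 2 = b 0"
    and c2: "c 2 \<ge> 1" and b1: "b 1 \<ge> 1" and a1: "a 1 \<noteq> 0" and D3: "D \<ge> 3"
    and Ps: "pseudo_cosine_seq_for D a b c t \<sigma>"
    and Pr: "pseudo_cosine_seq_for D a b c t' \<rho>"
    and Pp: "pseudo_cosine_seq_for D a b c t'' (\<lambda>i. \<sigma> i * \<rho> i)"
    and r1: "\<rho> 1 \<noteq> 1"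
  shows "\<sigma> 1 \<noteq> -1"
proof
  assume s1: "\<sigma> 1 = -1"
  define K where "K = real (b 0)"
  have D1: "D \<ge> 1" using D3 by simp
  have th: "t = K * \<sigma> 1" using theta0[OF Ps D1 a0 c0] K_def by simp
  have th': "t' = K * \<rho> 1" using theta0[OF Pr D1 a0 c0] K_def by simp
  have th'': "t'' = K * \<sigma> 1 * \<rho> 1" using theta0[OF Pp D1 a0 c0] K_def by simp
  have s0: "\<sigma> 0 = 1" and r0: "\<rho> 0 = 1" using Ps Pr unfolding pseudo_cosine_seq_for_def by auto
  have e1s: "real (c 1) * \<sigma> 0 + real (a 1) * \<sigma> 1 + real (b 1) * \<sigma> 2 = t * \<sigma> 1"
    using rec_at[OF Ps, of 1] D3 by (simp add: numeral_2_eq_2 numeral_3_eq_3)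
  have e1r: "real (c 1) * \<rho> 0 + real (a 1) * \<rho> 1 + real (b 1) * \<rho> 2 = t' * \<rho> 1"
    using rec_at[OF Pr, of 1] D3 by (simp add: numeral_2_eq_2 numeral_3_eq_3)
  have e1p: "real (c 1) * (\<sigma> 0 * \<rho> 0) + real (a 1) * (\<sigma> 1 * \<rho> 1) + real (b 1) * (\<sigma> 2 * \<rho> 2) = t'' * (\<sigma> 1 * \<rho> 1)"
    using rec_at[OF Pp, of 1] D3 by (simp add: numeral_2_eq_2 numeral_3_eq_3)
  have e2s: "real (c 2) * \<sigma> 1 + real (a 2) * \<sigma> 2 + real (b 2) * \<sigma> 3 = t * \<sigma> 2"
    using rec_at[OF Ps, of 2] D3 by (simp add: numeral_2_eq_2 numeral_3_eq_3)
  have e2r: "real (c 2) * \<rho> 1 + real (a 2) * \<rho> 2 + real (b 2) * \<rho> 3 = t' * \<rho> 2"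
    using rec_at[OF Pr, of 2] D3 by (simp add: numeral_2_eq_2 numeral_3_eq_3)
  have e2p: "real (c 2) * (\<sigma> 1 * \<rho> 1) + real (a 2) * (\<sigma> 2 * \<rho> 2) + real (b 2) * (\<sigma> 3 * \<rho> 3) = t'' * (\<sigma> 2 * \<rho> 2)"
    using rec_at[OF Pp, of 2] D3 by (simp add: numeral_2_eq_2 numeral_3_eq_3)
  define A1 where "A1 = real (a 1)"
  define B1 where "B1 = real (b 1)"
  have KK: "K = 1 + A1 + B1" using k1 c1 unfolding K_def A1_def B1_def by (metis of_nat_1 of_nat_add)
  have T: "(A1+1)*K*\<sigma> 1*\<rho> 1 + K*(\<sigma> 1+\<rho> 1) + B1 + 1 = 0"
    apply (rule tight1[OF KK th th' th'', of "\<sigma> 2" "\<rho> 2"])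
    using e1s e1r e1p s0 r0 c1 s1 r1 unfolding A1_def B1_def by (simp_all add: algebra_simps)
  have A1pos: "A1 \<ge> 1" using a1 unfolding A1_def by simp
  have B1pos: "B1 \<ge> 1" using b1 unfolding B1_def by simp
  have Kr: "K * \<rho> 1 = -1"
  proof -
    have "A1 * (K * \<rho> 1 + 1) = 0" using T s1 KK by (simp add: algebra_simps)
    then show ?thesis using A1pos by simp
  qed
  have s2: "B1 * \<sigma> 2 = B1 + 2*A1" using e1s s0 s1 th KK c1 unfolding A1_def B1_def by (simp add: algebra_simps)
  have Kr2: "K * \<rho> 2 = -1"
  proof -
    have "B1 * \<rho> 2 = t' * \<rho> 1 - 1 - A1 * \<rho> 1" using e1r r0 c1 unfolding A1_def B1_def by (simp add: algebra_simps)
    then have "B1 * (K * \<rho> 2) = K * (t' * \<rho> 1 - 1 - A1 * \<rho> 1)" by (metis mult.left_commute)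
    also have "\<dots> = - B1" using th' Kr KK by (simp add: algebra_simps)
    finally have "B1 * (K * \<rho> 2 + 1) = 0" by (simp add: algebra_simps)
    then show ?thesis using B1pos by simp
  qed
  define C2 where "C2 = real (c 2)"
  define A2 where "A2 = real (a 2)"
  define B2 where "B2 = real (b 2)"
  have KK2: "K = C2 + A2 + B2" using k2 unfolding K_def A2_def B2_def C2_def by (metis of_nat_add)
  have f1: "B2 * \<sigma> 3 = C2 - (A2 + K) * \<sigma> 2" using e2s s1 th unfolding C2_def A2_def B2_def by (simp add: algebra_simps)
  have f2: "K * B2 * \<rho> 3 = 1 + C2 + A2"
  proof -
    have "K * (C2 * \<rho> 1 + A2 * \<rho> 2 + B2 * \<rho> 3) = K * (t' * \<rho> 2)" using e2r unfolding C2_def A2_def B2_def by simp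
    moreover have "K * (C2 * \<rho> 1 + A2 * \<rho> 2 + B2 * \<rho> 3) = C2 * (K * \<rho> 1) + A2 * (K * \<rho> 2) + K * B2 * \<rho> 3"
      by (simp add: algebra_simps)
    moreover have "K * (t' * \<rho> 2) = t' * (K * \<rho> 2)" by simp
    ultimately have "C2 * (K * \<rho> 1) + A2 * (K * \<rho> 2) + K * B2 * \<rho> 3 = t' * (K * \<rho> 2)" by metis
    then show ?thesis using Kr Kr2 th' by simp
  qed
  have f3: "K * B2 * (\<sigma> 3 * \<rho> 3) = C2 * (K*\<rho> 1) - A2 * \<sigma> 2 * (K * \<rho> 2) + \<sigma> 2 * (K * \<rho> 2) * (\<sigma> 1 * (K * \<rho> 1))"
  proof -
    have "K * (C2 * (\<sigma> 1 * \<rho> 1) + A2 * (\<sigma> 2 * \<rho> 2) + B2 * (\<sigma> 3 * \<rho> 3)) = K * (t'' * (\<sigma> 2 * \<rho> 2))" using e2p unfolding C2_def A2_def B2_def by simp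
    then show ?thesis using th'' s1 by (simp add: algebra_simps)
  qed
  have f3': "K * B2 * (\<sigma> 3 * \<rho> 3) = - C2 + A2 * \<sigma> 2 - \<sigma> 2"
    using f3 unfolding Kr Kr2 s1 by simp
  have "(C2 - (A2 + K) * \<sigma> 2) * (1 + C2 + A2) = B2 * (- C2 + A2 * \<sigma> 2 - \<sigma> 2)"
  proof -
    have "(B2 * \<sigma> 3) * (K * B2 * \<rho> 3) = B2 * (K * B2 * (\<sigma> 3 * \<rho> 3))" by (simp add: algebra_simps)
    then show ?thesis using f1 f2 f3' by simp
  qed
  moreover have "(C2 - (A2 + K) * \<sigma> 2) * (1 + C2 + A2) - B2 * (- C2 + A2 * \<sigma> 2 - \<sigma> 2) = (K+1)*(C2 - \<sigma> 2*(C2+2*A2))"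
    unfolding KK2 by (simp add: algebra_simps)
  ultimately have "(K + 1) * (C2 - \<sigma> 2 * (C2 + 2*A2)) = 0" by simp
  moreover have "K \<ge> 0" unfolding K_def by simp
  ultimately have g: "C2 = \<sigma> 2 * (C2 + 2*A2)" by simp
  have "\<sigma> 2 > 1"
  proof -
    have "B1 * \<sigma> 2 > B1 * 1" using s2 A1pos by simp
    then show ?thesis using B1pos by (simp add: mult_less_cancel_left)
  qed
  moreover have "C2 \<ge> 1" using c2 unfolding C2_def by simp
  moreover have "A2 \<ge> 0" unfolding A2_def by simp
  ultimately have "\<sigma> 2 * (C2 + 2*A2) > C2"
  proof -
    assume h: "\<sigma> 2 > 1" "C2 \<ge> 1" "A2 \<ge> 0"
    have "\<sigma> 2 * (C2 + 2*A2) \<ge> \<sigma> 2 * C2" using h by (intro mult_left_mono) auto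
    moreover have "1 * C2 < \<sigma> 2 * C2" using h by (intro mult_strict_right_mono) auto
    ultimately show ?thesis by simp
  qed
  then show False using g by simp
qed



lemma descent:
  assumes Ps: "pseudo_cosine_seq_for D a b c t \<sigma>"
    and cpos: "\<And>i. 1\<le>i \<Longrightarrow> i\<le>D \<Longrightarrow> c i \<ge> 1"
  shows "j+1 \<le> D \<Longrightarrow> \<sigma> j = 0 \<Longrightarrow> \<sigma> (j+1) = 0 \<Longrightarrow> False"
proof (induction j)
  case 0 then show ?case using Ps unfolding pseudo_cosine_seq_for_def by simp
next
  case (Suc j)
  have "real (c (Suc j)) * \<sigma> (Suc j - 1) + real (a (Suc j)) * \<sigma> (Suc j) + real (b (Suc j)) * \<sigma> (Suc j + 1) = t * \<sigma> (Suc j)"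
    using rec_at[OF Ps, of "Suc j"] Suc.prems by simp
  then have "real (c (Suc j)) * \<sigma> j = 0" using Suc.prems by simp
  moreover have "c (Suc j) \<ge> 1" using cpos[of "Suc j"] Suc.prems by simp
  ultimately have "\<sigma> j = 0" by simp
  then show ?case using Suc.IH Suc.prems by simp
qed

lemma cancel_sr:
  fixes X Y Z x s r :: real
  assumes "x*(x*P) = (x*S)*(x*R)" "x*S = X*s" "x*R = Y*r" "x*P = Z*(s*r)" "s \<noteq> 0" "r \<noteq> 0"
  shows "X*Y = x*Z"
proof -
  have 1: "(x*S)*(x*R) = X*Y*(s*r)" unfolding assms(2,3) by (simp add: algebra_simps)
  have 2: "x*(x*P) = x*Z*(s*r)" unfolding assms(4) by (simp add: algebra_simps)
  have "(x*Z - X*Y)*(s*r) = x*Z*(s*r) - X*Y*(s*r)" by (rule left_diff_distrib)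
  also have "x*Z*(s*r) = X*Y*(s*r)" using 1 2 assms(1) by metis
  then have "x*Z*(s*r) - X*Y*(s*r) = 0" by simp
  finally have "(x*Z - X*Y)*(s*r) = 0" .
  then have "x*Z - X*Y = 0" using assms(5,6) by (simp only: mult_eq_0_iff) blast
  then show ?thesis by simp
qed

lemma eq_both:
  assumes Ps: "pseudo_cosine_seq_for D a b c t \<sigma>"
    and Pr: "pseudo_cosine_seq_for D a b c t' \<rho>"
    and Pp: "pseudo_cosine_seq_for D a b c t'' (\<lambda>i. \<sigma> i * \<rho> i)"
    and th: "t = real (b 0) * \<sigma> 1" and th': "t' = real (b 0) * \<rho> 1"
    and th'': "t'' = real (b 0) * \<sigma> 1 * \<rho> 1" and K0: "b 0 \<noteq> 0"
    and kk: "\<And>i. 1\<le>i \<Longrightarrow> i\<le>D \<Longrightarrow> c i + a i + b i = b 0"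
    and cpos: "\<And>i. 1\<le>i \<Longrightarrow> i\<le>D \<Longrightarrow> c i \<ge> 1"
    and bpos: "\<And>i. i<D \<Longrightarrow> b i \<ge> 1"
    and s1: "\<sigma> 1 \<noteq> 1" and r1: "\<rho> 1 \<noteq> 1" and D2: "D \<ge> 2"
    and i: "1 \<le> i" "i \<le> D"
    and es: "\<sigma> (i-1) = \<sigma> i" and er: "\<rho> (i-1) = \<rho> i"
    and sn: "\<sigma> i \<noteq> 0" and rn: "\<rho> i \<noteq> 0"
  shows False
proof -
  define K where "K = real (b 0)"
  have Kn: "K \<noteq> 0" using K0 K_def by simp
  show False
  proof (cases "i < D")
    case True
    define A where "A = real (a i)"
    define B where "B = real (b i)"
    define C where "C = real (c i)"
    have KK: "K = C + A + B" using kk[OF i] unfolding K_def A_def B_def C_def by (metis of_nat_add)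
    have "C * \<sigma> (i-1) + A * \<sigma> i + B * \<sigma> (i+1) = t * \<sigma> i" using rec_at[OF Ps True] unfolding A_def B_def C_def .
    then have Bs: "B * \<sigma> (i+1) = (t - K + B) * \<sigma> i" using es KK by (simp add: algebra_simps)
    have "C * \<rho> (i-1) + A * \<rho> i + B * \<rho> (i+1) = t' * \<rho> i" using rec_at[OF Pr True] unfolding A_def B_def C_def .
    then have Br: "B * \<rho> (i+1) = (t' - K + B) * \<rho> i" using er KK by (simp add: algebra_simps)
    have "C * (\<sigma> (i-1) * \<rho> (i-1)) + A * (\<sigma> i * \<rho> i) + B * (\<sigma> (i+1) * \<rho> (i+1)) = t'' * (\<sigma> i * \<rho> i)"
      using rec_at[OF Pp True] unfolding A_def B_def C_def by simp
    then have Bp: "B * (\<sigma> (i+1) * \<rho> (i+1)) = (t'' - K + B) * (\<sigma> i * \<rho> i)" using es er KK by (simp add: algebra_simps)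
    have "(t - K + B) * (t' - K + B) = B * (t'' - K + B)"
      by (rule cancel_sr[OF _ Bs Br Bp sn rn]) (simp add: algebra_simps)
    then have "(K*\<sigma> 1 - K + B) * (K*\<rho> 1 - K + B) = B * (K*\<sigma> 1*\<rho> 1 - K + B)"
      using th th' th'' K_def by simp
    then have "B = K" using key_x s1 r1 Kn by blast
    moreover have "C \<ge> 1" using cpos[OF i] C_def by simp
    moreover have "A \<ge> 0" using A_def by simp
    ultimately show False using KK by simp
  next
    case False
    then have iD: "i = D" using i by simp
    define j where "j = D - 1"
    have j: "1 \<le> j" "j < D" "j \<le> D" "j + 1 = i" using D2 iD j_def by auto
    define A where "A = real (a j)"
    define B where "B = real (b j)"
    define C where "C = real (c j)"
    have es': "\<sigma> (j+1) = \<sigma> j" and er': "\<rho> (j+1) = \<rho> j" using es er j iD by (simp_all add: j_def)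
    have sn': "\<sigma> j \<noteq> 0" and rn': "\<rho> j \<noteq> 0" using sn rn es er j iD by (simp_all add: j_def)
    have KK: "K = C + A + B" using kk[OF j(1,3)] unfolding K_def A_def B_def C_def by (metis of_nat_add)
    have "C * \<sigma> (j-1) + A * \<sigma> j + B * \<sigma> (j+1) = t * \<sigma> j" using rec_at[OF Ps j(2)] unfolding A_def B_def C_def .
    then have Cs: "C * \<sigma> (j-1) = (t - K + C) * \<sigma> j" using es' KK by (simp add: algebra_simps)
    have "C * \<rho> (j-1) + A * \<rho> j + B * \<rho> (j+1) = t' * \<rho> j" using rec_at[OF Pr j(2)] unfolding A_def B_def C_def .
    then have Cr: "C * \<rho> (j-1) = (t' - K + C) * \<rho> j" using er' KK by (simp add: algebra_simps)
    have "C * (\<sigma> (j-1) * \<rho> (j-1)) + A * (\<sigma> j * \<rho> j) + B * (\<sigma> (j+1) * \<rho> (j+1)) = t'' * (\<sigma> j * \<rho> j)"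
      using rec_at[OF Pp j(2)] unfolding A_def B_def C_def by simp
    then have Cp: "C * (\<sigma> (j-1) * \<rho> (j-1)) = (t'' - K + C) * (\<sigma> j * \<rho> j)" using es' er' KK by (simp add: algebra_simps)
    have "(t - K + C) * (t' - K + C) = C * (t'' - K + C)"
      by (rule cancel_sr[OF _ Cs Cr Cp sn' rn']) (simp add: algebra_simps)
    then have "(K*\<sigma> 1 - K + C) * (K*\<rho> 1 - K + C) = C * (K*\<sigma> 1*\<rho> 1 - K + C)"
      using th th' th'' K_def by simp
    then have "C = K" using key_x s1 r1 Kn by blast
    moreover have "B \<ge> 1" using bpos[OF j(2)] B_def by simp
    moreover have "A \<ge> 0" using A_def by simp
    ultimately show False using KK by simp
  qed
qed


theorem corollary8p6:
  fixes V :: "'a set" and E :: "'a \<Rightarrow> 'a \<Rightarrow> bool" and D :: nat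
    and a b c :: "nat \<Rightarrow> nat" and \<sigma> \<rho> :: "nat \<Rightarrow> real" and \<epsilon> :: real
  assumes "distance_regular V E D a b c"
    and "D \<ge> 3"
    and "a 1 \<noteq> 0"
    and "pseudo_cosine_seq D a b c \<sigma>" and "\<sigma> 1 \<noteq> 1"
    and "pseudo_cosine_seq D a b c \<rho>" and "\<rho> 1 \<noteq> 1"
    and "tight_pair D a b c \<sigma> \<rho>"
    and "auxiliary_parameter D \<sigma> \<rho> \<epsilon>"
  shows "\<epsilon> \<noteq> 1 \<and> \<epsilon> \<noteq> -1 \<and> (\<forall>i\<in>{1..D}. \<sigma> (i - 1) \<noteq> \<sigma> i \<and> \<rho> (i - 1) \<noteq> \<rho> i)"
proof -
  note DR = assms(1) and D3 = assms(2) and a1 = assms(3) and s1 = assms(5) and r1 = assms(7)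
  have D1: "D \<ge> 1" and D2: "D \<ge> 2" using D3 by auto
  obtain t where Ps: "pseudo_cosine_seq_for D a b c t \<sigma>" using assms(4) unfolding pseudo_cosine_seq_def by blast
  obtain t' where Pr: "pseudo_cosine_seq_for D a b c t' \<rho>" using assms(6) unfolding pseudo_cosine_seq_def by blast
  obtain t'' where Pp: "pseudo_cosine_seq_for D a b c t'' (\<lambda>i. \<sigma> i * \<rho> i)"
    using assms(8) unfolding tight_pair_def pseudo_cosine_seq_def by blast
  have Pp': "pseudo_cosine_seq_for D a b c t'' (\<lambda>i. \<rho> i * \<sigma> i)"
    using Pp by (simp add: mult.commute)
  note gf = graph_facts[OF DR D1]
  have kk: "\<And>i. 1\<le>i \<Longrightarrow> i\<le>D \<Longrightarrow> c i + a i + b i = b 0" by (rule gf(3))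
  have cpos: "\<And>i. 1\<le>i \<Longrightarrow> i\<le>D \<Longrightarrow> c i \<ge> 1" by (rule gf(4))
  have bpos: "\<And>i. i<D \<Longrightarrow> b i \<ge> 1" by (rule gf(5))
  have a0: "a 0 = 0" and c1: "c 1 = 1" using gf(1,2) .
  have c0: "c 0 = 0" using DR unfolding distance_regular_def by simp
  have K0: "b 0 \<noteq> 0" using bpos[of 0] D1 by simp
  have th: "t = real (b 0) * \<sigma> 1" by (rule theta0[OF Ps D1 a0 c0])
  have th': "t' = real (b 0) * \<rho> 1" by (rule theta0[OF Pr D1 a0 c0])
  have th'': "t'' = real (b 0) * \<sigma> 1 * \<rho> 1" using theta0[OF Pp D1 a0 c0] by simp
  have k1: "c 1 + a 1 + b 1 = b 0" using kk[of 1] D1 by simp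
  have k2: "c 2 + a 2 + b 2 = b 0" using kk[of 2] D2 by simp
  have c2: "c 2 \<ge> 1" using cpos[of 2] D2 by simp
  have b1: "b 1 \<ge> 1" using bpos[of 1] D2 by simp
  have nm_s: "\<sigma> 1 \<noteq> -1" by (rule no_m1[OF a0 c0 c1 k1 k2 c2 b1 a1 D3 Ps Pr Pp r1])
  have nm_r: "\<rho> 1 \<noteq> -1" by (rule no_m1[OF a0 c0 c1 k1 k2 c2 b1 a1 D3 Pr Ps Pp' s1])
  have s0: "\<sigma> 0 = 1" and r0: "\<rho> 0 = 1" using Ps Pr unfolding pseudo_cosine_seq_for_def by auto
  have aux: "\<And>i. 1 \<le> i \<Longrightarrow> i \<le> D \<Longrightarrow> \<sigma> i * \<rho> i - \<sigma> (i - 1) * \<rho> (i - 1) =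
                   \<epsilon> * (\<sigma> (i - 1) * \<rho> i - \<sigma> i * \<rho> (i - 1))"
    using assms(9) unfolding auxiliary_parameter_def by auto
  have aux1: "\<sigma> 1 * \<rho> 1 - 1 = \<epsilon> * (\<rho> 1 - \<sigma> 1)" using aux[of 1] D1 s0 r0 by simp
  have e1: "\<epsilon> \<noteq> 1"
  proof
    assume "\<epsilon> = 1"
    then have "(\<sigma> 1 - 1) * (\<rho> 1 + 1) = 0" using aux1 by (simp add: algebra_simps)
    then show False using s1 nm_r by simp
  qed
  have e2: "\<epsilon> \<noteq> -1"
  proof
    assume "\<epsilon> = -1"
    then have "(\<sigma> 1 + 1) * (\<rho> 1 - 1) = 0" using aux1 by (simp add: algebra_simps)
    then show False using r1 nm_s by simp
  qed
  have EB: "\<And>i. 1 \<le> i \<Longrightarrow> i \<le> D \<Longrightarrow> \<sigma> (i-1) = \<sigma> i \<Longrightarrow> \<rho> (i-1) = \<rho> i \<Longrightarrow> False"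
  proof -
    fix i assume i: "1 \<le> i" "i \<le> D" and es: "\<sigma> (i-1) = \<sigma> i" and er: "\<rho> (i-1) = \<rho> i"
    have sn: "\<sigma> i \<noteq> 0" using descent[OF Ps cpos, of "i-1"] i es by force
    have rn: "\<rho> i \<noteq> 0" using descent[OF Pr cpos, of "i-1"] i er by force
    show False by (rule eq_both[OF Ps Pr Pp th th' th'' K0 kk cpos bpos s1 r1 D2 i es er sn rn])
  qed
  have "\<forall>i\<in>{1..D}. \<sigma> (i - 1) \<noteq> \<sigma> i \<and> \<rho> (i - 1) \<noteq> \<rho> i"
  proof (intro ballI conjI notI)
    fix i assume iD: "i \<in> {1..D}" and es: "\<sigma> (i - 1) = \<sigma> i"
    have i: "1 \<le> i" "i \<le> D" using iD by auto
    have sn: "\<sigma> i \<noteq> 0" using descent[OF Ps cpos, of "i-1"] i es by force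
    have "(1 - \<epsilon>) * \<sigma> i * (\<rho> i - \<rho> (i-1)) = 0" using aux[OF i] es by (simp add: algebra_simps)
    then have "\<rho> (i-1) = \<rho> i" using e1 sn by simp
    then show False using EB[OF i es] by simp
  next
    fix i assume iD: "i \<in> {1..D}" and er: "\<rho> (i - 1) = \<rho> i"
    have i: "1 \<le> i" "i \<le> D" using iD by auto
    have rn: "\<rho> i \<noteq> 0" using descent[OF Pr cpos, of "i-1"] i er by force
    have "(1 + \<epsilon>) * \<rho> i * (\<sigma> i - \<sigma> (i-1)) = 0" using aux[OF i] er by (simp add: algebra_simps)
    then have "\<sigma> (i-1) = \<sigma> i" using e2 rn by simp
    then show False using EB[OF i _ er] by simp
  qed
  then show ?thesis using e1 e2 by simp
qed

end
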